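(* For all positive integers $k$, $r$ and $c$, there is an integer $N$ such that every set $A$ of $N$ lines in $\mathbb{R}^2$ in which no $r+1$ lines pass through a common point contains pairwise disjoint subsets $A_1,\dots,A_k$ with $|A_i|\ge c$ for all $i$, such that every transversal of $CH(A_1),\dots,CH(A_k)$ is in convex position.
   Context: For a finite set $A$ of lines in $\mathbb{R}^2$, $V(A)$ is the set of intersection points of pairs of lines of $A$ and $CH(A)$ is the convex hull of $V(A)$. A transversal of sets $X_1,\dots,X_k$ is a $k$-tuple $(x_1,\dots,x_k)$ with $x_i\in X_i$. A finite point set is in convex position if each of its points is a vertex of its convex hull. *)

theory Defs
  imports "HOL-Analysis.Analysis"
begin

type_synonym point = "real ^ 2"

definition is_line :: "point set \<Rightarrow> bool" where
  "is_line L \<longleftrightarrow> (\<exists>a b. b \<noteq> 0 \<and> L = {a + t *\<^sub>R b | t. True})"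

definition V :: "point set set \<Rightarrow> point set" where
  "V A = {p. \<exists>L\<in>A. \<exists>M\<in>A. L \<noteq> M \<and> p \<in> L \<and> p \<in> M}"

definition CH :: "point set set \<Rightarrow> point set" where
  "CH A = convex hull (V A)"

definition convex_position :: "point set \<Rightarrow> bool" where
  "convex_position S \<longleftrightarrow> finite S \<and> (\<forall>x\<in>S. x extreme_point_of (convex hull S))"

end

theory Submission
  imports Defs "HOL-Library.Ramsey"
begin


definition sl :: "(nat\<Rightarrow>real) \<Rightarrow> (nat\<Rightarrow>real) \<Rightarrow> nat \<Rightarrow> nat \<Rightarrow> real" where
  "sl a b i j = (b j - b i) / (a j - a i)"

definition chd :: "(nat\<Rightarrow>real) \<Rightarrow> (nat\<Rightarrow>real) \<Rightarrow> nat \<Rightarrow> nat \<Rightarrow> real \<Rightarrow> real" where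
  "chd a b i j m = b i + sl a b i j * (m - a i)"

lemma sl_sym: "sl a b i j = sl a b j i"
  unfolding sl_def by (metis minus_diff_eq minus_divide_divide)

lemma chd_sym: "a i \<noteq> a j \<Longrightarrow> chd a b i j m = chd a b j i m"
  unfolding chd_def sl_def by (simp add: field_simps)

lemma chd_lin: "chd a b i j m = chd a b i j m' + sl a b i j * (m - m')"
  unfolding chd_def by (simp add: algebra_simps)

lemma chd_at_i: "chd a b i j (a i) = b i"
  unfolding chd_def by simp

lemma chd_at_j: "a i \<noteq> a j \<Longrightarrow> chd a b i j (a j) = b j"
  unfolding chd_def sl_def by (simp add: field_simps)

lemma b_via_sl: "a i \<noteq> a j \<Longrightarrow> b j = b i + sl a b i j * (a j - a i)"
  unfolding sl_def by (simp add: field_simps)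

locale cupseq =
  fixes a b :: "nat \<Rightarrow> real" and n :: nat
  assumes inc: "\<And>i j. i < j \<Longrightarrow> j < n \<Longrightarrow> a i < a j"
    and cup: "\<And>i j l. i < j \<Longrightarrow> j < l \<Longrightarrow> l < n \<Longrightarrow> sl a b i j < sl a b j l"
begin

lemma D1:
  assumes "i < j" "j < l" "l < n"
  shows "sl a b i j < sl a b i l \<and> sl a b i l < sl a b j l"
proof -
  have aij: "a i < a j" "a j < a l" "a i < a l" using inc assms by auto
  have c: "sl a b i j < sl a b j l" using cup assms by auto
  have e1: "b j = b i + sl a b i j * (a j - a i)" using b_via_sl aij by (metis less_irrefl)
  have e2: "b l = b j + sl a b j l * (a l - a j)" using b_via_sl aij by (metis less_irrefl)
  have e3: "b l = b i + sl a b i l * (a l - a i)" using b_via_sl aij by (metis less_irrefl)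
  have id1: "(sl a b i l - sl a b i j) * (a l - a i) = (sl a b j l - sl a b i j) * (a l - a j)"
    using e1 e2 e3 by (simp add: algebra_simps)
  have id2: "(sl a b j l - sl a b i l) * (a l - a i) = (sl a b j l - sl a b i j) * (a j - a i)"
    using e1 e2 e3 by (simp add: algebra_simps)
  have p1: "(sl a b j l - sl a b i j) * (a l - a j) > 0" using c aij by simp
  have p2: "(sl a b j l - sl a b i j) * (a j - a i) > 0" using c aij by simp
  have "(sl a b i l - sl a b i j) * (a l - a i) > 0" using id1 p1 by simp
  then have "sl a b i l - sl a b i j > 0" using aij by (simp add: zero_less_mult_iff)
  moreover have "(sl a b j l - sl a b i l) * (a l - a i) > 0" using id2 p2 by simp
  then have "sl a b j l - sl a b i l > 0" using aij by (simp add: zero_less_mult_iff)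
  ultimately show ?thesis by simp
qed

lemma D2:
  assumes "i < j" "i' < j'" "i \<le> i'" "j \<le> j'" "(i, j) \<noteq> (i', j')" "j' < n"
  shows "sl a b i j < sl a b i' j'"
proof -
  have le: "sl a b i j \<le> sl a b i j'"
    using D1[of i j j'] assms by (cases "j = j'") auto
  show ?thesis
  proof (cases "i = i'")
    case True
    then have "j < j'" using assms by auto
    then show ?thesis using D1[of i j j'] assms True by auto
  next
    case False
    then have "sl a b i j' < sl a b i' j'" using D1[of i i' j'] assms by auto
    then show ?thesis using le by simp
  qed
qed

lemma D3:
  assumes "i < j" "j < n" "l < n" "l < i \<or> j < l"
  shows "b l > chd a b i j (a l)"
  using assms(4)
proof
  assume "j < l"
  have aa: "a i < a l" using inc assms \<open>j<l\<close> by auto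
  have e: "b l = b i + sl a b i l * (a l - a i)" using b_via_sl aa by (metis less_irrefl)
  have "sl a b i j < sl a b i l" using D1[of i j l] assms \<open>j<l\<close> by auto
  then have "(sl a b i l - sl a b i j) * (a l - a i) > 0" using aa by simp
  then show ?thesis using e unfolding chd_def by (simp add: algebra_simps)
next
  assume "l < i"
  have aa: "a l < a i" using inc assms \<open>l<i\<close> by auto
  have e: "b i = b l + sl a b l i * (a i - a l)" using b_via_sl aa by (metis less_irrefl)
  have "sl a b l i < sl a b i j" using D2[of l i i j] assms \<open>l<i\<close> by auto
  then have "(sl a b i j - sl a b l i) * (a i - a l) > 0" using aa by simp
  then show ?thesis using e unfolding chd_def by (simp add: algebra_simps)
qed

lemma D3':
  assumes "i < j" "j < n" "l < n" "l \<le> i \<or> j \<le> l"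
  shows "b l \<ge> chd a b i j (a l)"
proof (cases "l = i \<or> l = j")
  case True
  have "a i \<noteq> a j" using inc assms by (metis less_irrefl)
  then show ?thesis using True chd_at_i chd_at_j by (metis order_refl)
next
  case False
  then show ?thesis using D3[of i j l] assms by fastforce
qed


lemma core:
  assumes "1 \<le> \<alpha>" "\<alpha> \<le> \<beta>" "\<beta> + 1 < n"
  shows "\<exists>m q. (\<forall>i j. \<alpha> \<le> i \<longrightarrow> i < j \<longrightarrow> j \<le> \<beta> \<longrightarrow> chd a b i j m > q) \<and>
               (\<forall>i j. i < j \<longrightarrow> j < \<alpha> \<longrightarrow> chd a b i j m < q) \<and>
               (\<forall>i j. \<beta> < i \<longrightarrow> i < j \<longrightarrow> j < n \<longrightarrow> chd a b i j m < q)"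
proof -
  define g where "g = \<alpha> - 1"
  define h where "h = \<beta> + 1"
  have g: "g < \<alpha>" "g < \<beta>" "Suc g = \<alpha>" using assms unfolding g_def by auto
  have h: "\<beta> < h" "h < n" "\<alpha> < h" using assms unfolding h_def by auto
  define s1 where "s1 = sl a b g \<alpha>"
  define s2 where "s2 = sl a b \<beta> h"
  have s12: "s1 < s2" unfolding s1_def s2_def using D2[of g \<alpha> \<beta> h] g h assms by auto
  define m where "m = (b \<beta> - s2 * a \<beta> - b g + s1 * a g) / (s1 - s2)"
  define q where "q = chd a b g \<alpha> m"
  have L1: "\<And>x. chd a b g \<alpha> x = b g + s1 * (x - a g)" unfolding chd_def s1_def by simp
  have L2: "\<And>x. chd a b \<beta> h x = b \<beta> + s2 * (x - a \<beta>)" unfolding chd_def s2_def by simp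
  have Leq: "chd a b \<beta> h m = q"
    unfolding q_def L1 L2 m_def using s12 by (simp add: field_simps)
  have q1: "\<And>x. chd a b g \<alpha> x = q + s1 * (x - m)" unfolding q_def L1 by (simp add: algebra_simps)
  have q2: "\<And>x. chd a b \<beta> h x = q + s2 * (x - m)" using Leq unfolding L2 by (simp add: algebra_simps)
  have agm: "a g < m"
  proof -
    have "b g > chd a b \<beta> h (a g)" using D3[of \<beta> h g] g h by auto
    moreover have "chd a b g \<alpha> (a g) = b g" by (rule chd_at_i)
    ultimately have "(s2 - s1) * (a g - m) < 0" using q1 q2 by (simp add: algebra_simps)
    then show ?thesis using s12 by (simp add: mult_less_0_iff)
  qed
  have ahm: "m < a h"
  proof -
    have "b h > chd a b g \<alpha> (a h)" using D3[of g \<alpha> h] g h by auto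
    moreover have "chd a b \<beta> h (a h) = b h" using chd_at_j inc h by (metis less_irrefl)
    ultimately have "(s2 - s1) * (a h - m) > 0" using q1 q2 by (simp add: algebra_simps)
    then show ?thesis using s12 by (simp add: zero_less_mult_iff)
  qed
  have own: "chd a b i j m > q" if ij: "\<alpha> \<le> i" "i < j" "j \<le> \<beta>" for i j
  proof -
    define s where "s = sl a b i j"
    have ss1: "s1 < s" unfolding s1_def s_def using D2[of g \<alpha> i j] g h ij by auto
    have ss2: "s < s2" unfolding s2_def s_def using D2[of i j \<beta> h] g h ij by auto
    have b1: "b i \<ge> q + s1 * (a i - m)" using D3'[of g \<alpha> i] q1[of "a i"] g h ij by auto
    have b2: "b i > q + s2 * (a i - m)" using D3[of \<beta> h i] q2[of "a i"] g h ij by auto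
    have c: "chd a b i j m = b i + s * (m - a i)" unfolding chd_def s_def by simp
    show ?thesis
    proof (cases "a i \<ge> m")
      case True
      have "(s2 - s) * (a i - m) \<ge> 0" using True ss2 by simp
      then show ?thesis using c b2 by (simp add: algebra_simps)
    next
      case False
      have "(s - s1) * (m - a i) > 0" using False ss1 by simp
      then show ?thesis using c b1 by (simp add: algebra_simps)
    qed
  qed
  have left: "chd a b i j m < q" if ij: "i < j" "j < \<alpha>" for i j
  proof -
    define s where "s = sl a b i j"
    have ss1: "s < s1" unfolding s1_def s_def using D2[of i j g \<alpha>] g h ij by auto
    have bg: "b g \<ge> chd a b i j (a g)" using D3'[of i j g] g h ij by auto
    have c: "chd a b i j m = chd a b i j (a g) + s * (m - a g)" unfolding s_def by (rule chd_lin)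
    have "(s1 - s) * (m - a g) > 0" using ss1 agm by simp
    moreover have "q = b g + s1 * (m - a g)" unfolding q_def L1 by simp
    ultimately show ?thesis using c bg by (simp add: algebra_simps)
  qed
  have right: "chd a b i j m < q" if ij: "\<beta> < i" "i < j" "j < n" for i j
  proof -
    define s where "s = sl a b i j"
    have ss2: "s2 < s" unfolding s2_def s_def using D2[of \<beta> h i j] g h ij unfolding h_def by auto
    have bh: "b h \<ge> chd a b i j (a h)" using D3'[of i j h] g h ij unfolding h_def by auto
    have c: "chd a b i j m = chd a b i j (a h) + s * (m - a h)" unfolding s_def by (rule chd_lin)
    have "(s - s2) * (a h - m) > 0" using ss2 ahm by simp
    moreover have "q = b h + s2 * (m - a h)"
    proof -
      have "chd a b \<beta> h (a h) = b h" using chd_at_j inc h by (metis less_irrefl)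
      then show ?thesis using q2[of "a h"] q2[of m] by (simp add: algebra_simps)
    qed
    ultimately show ?thesis using c bh by (simp add: algebra_simps)
  qed
  show ?thesis using own left right by blast
qed

end


definition sep :: "(nat\<Rightarrow>real) \<Rightarrow> (nat\<Rightarrow>real) \<Rightarrow> nat \<Rightarrow> nat \<Rightarrow> nat \<Rightarrow> real \<Rightarrow> real \<Rightarrow> real \<Rightarrow> bool" where
  "sep a b n \<alpha> \<beta> m q \<sigma> \<longleftrightarrow>
     (\<forall>i j. \<alpha> \<le> i \<longrightarrow> i \<le> \<beta> \<longrightarrow> \<alpha> \<le> j \<longrightarrow> j \<le> \<beta> \<longrightarrow> i \<noteq> j \<longrightarrow> \<sigma> * (chd a b i j m - q) > 0) \<and>
     (\<forall>i j. i < \<alpha> \<longrightarrow> j < \<alpha> \<longrightarrow> i \<noteq> j \<longrightarrow> \<sigma> * (chd a b i j m - q) < 0) \<and>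
     (\<forall>i j. \<beta> < i \<longrightarrow> i < n \<longrightarrow> \<beta> < j \<longrightarrow> j < n \<longrightarrow> i \<noteq> j \<longrightarrow> \<sigma> * (chd a b i j m - q) < 0)"

lemma (in cupseq) cup_sep:
  assumes "1 \<le> \<alpha>" "\<alpha> \<le> \<beta>" "\<beta> + 1 < n"
  shows "\<exists>m q. sep a b n \<alpha> \<beta> m q 1"
proof -
  obtain m q where mq:
    "\<forall>i j. \<alpha> \<le> i \<longrightarrow> i < j \<longrightarrow> j \<le> \<beta> \<longrightarrow> chd a b i j m > q"
    "\<forall>i j. i < j \<longrightarrow> j < \<alpha> \<longrightarrow> chd a b i j m < q"
    "\<forall>i j. \<beta> < i \<longrightarrow> i < j \<longrightarrow> j < n \<longrightarrow> chd a b i j m < q"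
    using core[OF assms] by blast
  have sym: "chd a b i j m = chd a b j i m" if "i < n" "j < n" "i \<noteq> j" for i j
  proof -
    have "a i \<noteq> a j" using inc that by (metis less_irrefl nat_neq_iff)
    then show ?thesis by (rule chd_sym)
  qed
  have "sep a b n \<alpha> \<beta> m q 1"
    unfolding sep_def
  proof (intro conjI allI impI)
    fix i j assume h: "\<alpha> \<le> i" "i \<le> \<beta>" "\<alpha> \<le> j" "j \<le> \<beta>" "i \<noteq> j"
    show "1 * (chd a b i j m - q) > 0"
    proof (cases "i < j")
      case True then show ?thesis using mq(1) h by auto
    next
      case False then have "j < i" using h by auto
      then show ?thesis using mq(1) h sym[of i j] assms by auto
    qed
  next
    fix i j assume h: "i < \<alpha>" "j < \<alpha>" "i \<noteq> j"
    show "1 * (chd a b i j m - q) < 0"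
    proof (cases "i < j")
      case True then show ?thesis using mq(2) h by auto
    next
      case False then have "j < i" using h by auto
      then show ?thesis using mq(2) h sym[of i j] assms by auto
    qed
  next
    fix i j assume h: "\<beta> < i" "i < n" "\<beta> < j" "j < n" "i \<noteq> j"
    show "1 * (chd a b i j m - q) < 0"
    proof (cases "i < j")
      case True then show ?thesis using mq(3) h by auto
    next
      case False then have "j < i" using h by auto
      then show ?thesis using mq(3) h sym[of i j] assms by auto
    qed
  qed
  then show ?thesis by blast
qed

lemma cap_sep:
  fixes a b :: "nat \<Rightarrow> real"
  assumes inc: "\<And>i j. i < j \<Longrightarrow> j < n \<Longrightarrow> a i < a j"
    and cap: "\<And>i j l. i < j \<Longrightarrow> j < l \<Longrightarrow> l < n \<Longrightarrow> sl a b i j > sl a b j l"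
    and ab: "1 \<le> \<alpha>" "\<alpha> \<le> \<beta>" "\<beta> + 1 < n"
  shows "\<exists>m q. sep a b n \<alpha> \<beta> m q (-1)"
proof -
  define a' where "a' i = - a (n - 1 - i)" for i
  define b' where "b' i = - b (n - 1 - i)" for i
  have slr: "sl a' b' i j = sl a b (n - 1 - i) (n - 1 - j)" for i j
  proof -
    have e1: "b' j - b' i = - (b (n - 1 - j) - b (n - 1 - i))" unfolding b'_def by simp
    have e2: "a' j - a' i = - (a (n - 1 - j) - a (n - 1 - i))" unfolding a'_def by simp
    show ?thesis unfolding sl_def e1 e2 minus_divide_divide ..
  qed
  interpret c: cupseq a' b' n
  proof
    fix i j assume "i < j" "j < n"
    then have "a (n - 1 - j) < a (n - 1 - i)" using inc by auto
    then show "a' i < a' j" unfolding a'_def by simp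
  next
    fix i j l assume h: "i < j" "j < l" "l < n"
    have "sl a b (n - 1 - l) (n - 1 - j) > sl a b (n - 1 - j) (n - 1 - i)"
      using cap h by auto
    then show "sl a' b' i j < sl a' b' j l" unfolding slr using sl_sym by metis
  qed
  obtain m q where sp: "sep a' b' n (n - 1 - \<beta>) (n - 1 - \<alpha>) m q 1"
    using c.cup_sep ab by fastforce
  have cr: "chd a b i j (- m) = - chd a' b' (n - 1 - i) (n - 1 - j) m" if "i < n" "j < n" for i j
  proof -
    have ii: "n - 1 - (n - 1 - i) = i" "n - 1 - (n - 1 - j) = j" using that by auto
    have "sl a' b' (n - 1 - i) (n - 1 - j) = sl a b i j" unfolding slr ii by simp
    then show ?thesis unfolding chd_def a'_def b'_def ii by (simp add: algebra_simps)
  qed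
  have key: "(-1) * (chd a b i j (- m) - (- q)) = chd a' b' (n - 1 - i) (n - 1 - j) m - q"
    if "i < n" "j < n" for i j using cr[OF that] by simp
  have sp1: "\<And>i j. n - 1 - \<beta> \<le> i \<Longrightarrow> i \<le> n - 1 - \<alpha> \<Longrightarrow> n - 1 - \<beta> \<le> j \<Longrightarrow> j \<le> n - 1 - \<alpha> \<Longrightarrow> i \<noteq> j \<Longrightarrow> chd a' b' i j m - q > 0"
    and sp2: "\<And>i j. i < n - 1 - \<beta> \<Longrightarrow> j < n - 1 - \<beta> \<Longrightarrow> i \<noteq> j \<Longrightarrow> chd a' b' i j m - q < 0"
    and sp3: "\<And>i j. n - 1 - \<alpha> < i \<Longrightarrow> i < n \<Longrightarrow> n - 1 - \<alpha> < j \<Longrightarrow> j < n \<Longrightarrow> i \<noteq> j \<Longrightarrow> chd a' b' i j m - q < 0"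
    using sp unfolding sep_def by auto
  have "sep a b n \<alpha> \<beta> (- m) (- q) (-1)"
    unfolding sep_def
  proof (intro conjI allI impI)
    fix i j assume h: "\<alpha> \<le> i" "i \<le> \<beta>" "\<alpha> \<le> j" "j \<le> \<beta>" "i \<noteq> j"
    have n: "i < n" "j < n" using h ab by auto
    have "chd a' b' (n - 1 - i) (n - 1 - j) m - q > 0"
      by (rule sp1) (use h ab in auto)
    then show "(-1) * (chd a b i j (- m) - (- q)) > 0" using key[OF n] by simp
  next
    fix i j assume h: "i < \<alpha>" "j < \<alpha>" "i \<noteq> j"
    have n: "i < n" "j < n" using h ab by auto
    have "chd a' b' (n - 1 - i) (n - 1 - j) m - q < 0"
      by (rule sp3) (use h ab in auto)
    then show "(-1) * (chd a b i j (- m) - (- q)) < 0" using key[OF n] by simp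
  next
    fix i j assume h: "\<beta> < i" "i < n" "\<beta> < j" "j < n" "i \<noteq> j"
    have n: "i < n" "j < n" using h ab by auto
    have "chd a' b' (n - 1 - i) (n - 1 - j) m - q < 0"
      by (rule sp2) (use h ab in auto)
    then show "(-1) * (chd a b i j (- m) - (- q)) < 0" using key[OF n] by simp
  qed
  then show ?thesis by blast
qed



definition NV :: "real \<Rightarrow> real \<Rightarrow> point set" where
  "NV \<alpha> \<beta> = {p. p$2 = \<alpha> * p$1 + \<beta>}"

lemma NV_pt: "vector [x, \<alpha> * x + \<beta>] \<in> NV \<alpha> \<beta>"
  unfolding NV_def by simp

lemma NV_inj: "NV \<alpha> \<beta> = NV \<alpha>' \<beta>' \<Longrightarrow> \<alpha> = \<alpha>' \<and> \<beta> = \<beta>'"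
proof -
  assume e: "NV \<alpha> \<beta> = NV \<alpha>' \<beta>'"
  have "vector [0, \<alpha> * 0 + \<beta>] \<in> NV \<alpha>' \<beta>'" using e NV_pt by metis
  then have b: "\<beta> = \<beta>'" unfolding NV_def by simp
  have "vector [1, \<alpha> * 1 + \<beta>] \<in> NV \<alpha>' \<beta>'" using e NV_pt by metis
  then have "\<alpha> + \<beta> = \<alpha>' + \<beta>'" unfolding NV_def by simp
  then show ?thesis using b by simp
qed

lemma val_chd:
  assumes "a i \<noteq> a j" "p \<in> NV (a i) (b i)" "p \<in> NV (a j) (b j)"
  shows "p$2 - m * p$1 - q = chd a b i j m - q"
proof -
  have e1: "p$2 = a i * p$1 + b i" "p$2 = a j * p$1 + b j" using assms unfolding NV_def by auto
  then have "p$1 * (a j - a i) = b i - b j" by (simp add: algebra_simps)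
  then have x: "p$1 = - sl a b i j" unfolding sl_def using assms(1)
    by (simp add: field_simps)
  show ?thesis unfolding chd_def e1(1) x by (simp add: algebra_simps)
qed

lemma aff_comb:
  fixes x y :: point
  assumes "u + v = 1"
  shows "(u *\<^sub>R x + v *\<^sub>R y)$2 - m * (u *\<^sub>R x + v *\<^sub>R y)$1 - q
         = u * (x$2 - m * x$1 - q) + v * (y$2 - m * y$1 - q)"
proof -
  have "q = u * q + v * q" using assms by (metis mult_1 distrib_right)
  then show ?thesis by (simp add: algebra_simps)
qed

lemma pos_comb:
  fixes u v A B :: real
  assumes "u \<ge> 0" "v \<ge> 0" "u + v = 1" "A > 0" "B > 0"
  shows "u * A + v * B > 0"
proof (cases "u > 0")
  case True
  then have "u * A > 0" using assms by simp
  moreover have "v * B \<ge> 0" using assms by simp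
  ultimately show ?thesis by simp
next
  case False
  then have "v = 1" using assms by simp
  then show ?thesis using assms False by simp
qed

lemma convex_hp_pos: "convex {p :: point. 0 < \<sigma> * (p$2 - m * p$1 - q)}"
  unfolding convex_def
proof (intro ballI allI impI)
  fix x y :: point and u v :: real
  assume h: "x \<in> {p. 0 < \<sigma> * (p$2 - m * p$1 - q)}" "y \<in> {p. 0 < \<sigma> * (p$2 - m * p$1 - q)}"
    "0 \<le> u" "0 \<le> v" "u + v = 1"
  have "0 < u * (\<sigma> * (x$2 - m * x$1 - q)) + v * (\<sigma> * (y$2 - m * y$1 - q))"
    using h by (intro pos_comb) auto
  moreover have "\<sigma> * ((u *\<^sub>R x + v *\<^sub>R y)$2 - m * (u *\<^sub>R x + v *\<^sub>R y)$1 - q)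
      = u * (\<sigma> * (x$2 - m * x$1 - q)) + v * (\<sigma> * (y$2 - m * y$1 - q))"
    unfolding aff_comb[OF h(5), of x y m q] by (simp add: algebra_simps)
  ultimately show "u *\<^sub>R x + v *\<^sub>R y \<in> {p. 0 < \<sigma> * (p$2 - m * p$1 - q)}"
    by simp
qed

lemma convex_hp_neg: "convex {p :: point. \<sigma> * (p$2 - m * p$1 - q) < 0}"
proof -
  have "{p :: point. \<sigma> * (p$2 - m * p$1 - q) < 0} = {p :: point. 0 < (-\<sigma>) * (p$2 - m * p$1 - q)}"
    by auto
  then show ?thesis using convex_hp_pos by metis
qed


lemma final_geo:
  fixes a b :: "nat \<Rightarrow> real" and A :: "point set set"
  assumes inja: "\<And>i j. i < n \<Longrightarrow> j < n \<Longrightarrow> i \<noteq> j \<Longrightarrow> a i \<noteq> a j"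
    and inA: "\<And>i. i < n \<Longrightarrow> NV (a i) (b i) \<in> A"
    and n: "k * c + 2 \<le> n" and c: "c > 0"
    and seps: "\<And>t. t < k \<Longrightarrow> \<exists>m q \<sigma>. sep a b n (1 + t * c) (t * c + c) m q \<sigma>"
  shows "\<exists>As :: nat \<Rightarrow> point set set.
              (\<forall>i<k. As i \<subseteq> A \<and> card (As i) \<ge> c) \<and>
              (\<forall>i<k. \<forall>j<k. i \<noteq> j \<longrightarrow> As i \<inter> As j = {}) \<and>
              (\<forall>x :: nat \<Rightarrow> point. (\<forall>i<k. x i \<in> CH (As i)) \<longrightarrow>
                  convex_position (x ` {..<k}))"
proof -
  define ll where "ll i = NV (a i) (b i)" for i
  define B where "B t = {1 + t * c .. t * c + c}" for t
  define As where "As t = ll ` B t" for t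
  have injl: "i = j" if "i < n" "j < n" "ll i = ll j" for i j
    using that NV_inj inja unfolding ll_def by blast
  have Bn: "i < n" if "t < k" "i \<in> B t" for t i
  proof -
    have "t * c + c \<le> k * c"
    proof -
      have "(t + 1) * c \<le> k * c" using that by (intro mult_le_mono1) simp
      then show ?thesis by (simp add: algebra_simps)
    qed
    then show ?thesis using that n unfolding B_def by auto
  qed
  have inj: "inj_on ll (B t)" if "t < k" for t
    using injl Bn[OF that] unfolding inj_on_def by blast
  have cardB: "card (B t) = c" for t unfolding B_def using c by simp
  have sub: "As t \<subseteq> A" if "t < k" for t
    using Bn[OF that] inA unfolding As_def ll_def by auto
  have card: "card (As t) = c" if "t < k" for t
    unfolding As_def using card_image[OF inj[OF that]] cardB by simp
  have Bord: "j < i" if "u < t" "i \<in> B t" "j \<in> B u" for t u i j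
  proof -
    have "u * c + c \<le> t * c"
    proof -
      have "(u + 1) * c \<le> t * c" using that by (intro mult_le_mono1) simp
      then show ?thesis by (simp add: algebra_simps)
    qed
    then show ?thesis using that unfolding B_def by auto
  qed
  have disj: "As t \<inter> As u = {}" if "t < k" "u < k" "t \<noteq> u" for t u
  proof (rule ccontr)
    assume "As t \<inter> As u \<noteq> {}"
    then obtain i j where ij: "i \<in> B t" "j \<in> B u" "ll i = ll j" unfolding As_def by auto
    then have "i = j" using injl Bn that by blast
    moreover have "i \<noteq> j" using Bord[of u t i j] Bord[of t u j i] ij that by (cases "u < t") auto
    ultimately show False by simp
  qed
  have sides: "(\<forall>u<k. u \<noteq> t \<longrightarrow> CH (As u) \<subseteq> {p. \<sigma> * (p$2 - m * p$1 - q) < 0}) \<and>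
      CH (As t) \<subseteq> {p. 0 < \<sigma> * (p$2 - m * p$1 - q)}"
    if t: "t < k" and sp: "sep a b n (1 + t * c) (t * c + c) m q \<sigma>" for t m q \<sigma>
  proof -
    have Vv: "\<exists>i j. i \<in> B u \<and> j \<in> B u \<and> i \<noteq> j \<and> p$2 - m * p$1 - q = chd a b i j m - q"
      if u: "u < k" and p: "p \<in> V (As u)" for u p
    proof -
      obtain L M where LM: "L \<in> As u" "M \<in> As u" "L \<noteq> M" "p \<in> L" "p \<in> M"
        using p unfolding V_def by auto
      obtain i j where ij: "i \<in> B u" "j \<in> B u" "L = ll i" "M = ll j" using LM unfolding As_def by auto
      then have ne: "i \<noteq> j" using LM by auto
      have "a i \<noteq> a j" using inja ne Bn u ij by blast
      then have "p$2 - m * p$1 - q = chd a b i j m - q"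
        using val_chd LM ij unfolding ll_def by blast
      then show ?thesis using ij ne by blast
    qed
    have own: "CH (As t) \<subseteq> {p. 0 < \<sigma> * (p$2 - m * p$1 - q)}"
      unfolding CH_def
    proof (rule hull_minimal)
      show "convex {p :: point. 0 < \<sigma> * (p$2 - m * p$1 - q)}" by (rule convex_hp_pos)
    next
      show "V (As t) \<subseteq> {p. 0 < \<sigma> * (p$2 - m * p$1 - q)}"
      proof
        fix p assume "p \<in> V (As t)"
        then obtain i j where ij: "i \<in> B t" "j \<in> B t" "i \<noteq> j" "p$2 - m * p$1 - q = chd a b i j m - q"
          using Vv t by blast
        then show "p \<in> {p. 0 < \<sigma> * (p$2 - m * p$1 - q)}" using sp unfolding sep_def B_def by auto
      qed
    qed
    have oth: "CH (As u) \<subseteq> {p. \<sigma> * (p$2 - m * p$1 - q) < 0}" if u: "u < k" "u \<noteq> t" for u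
      unfolding CH_def
    proof (rule hull_minimal)
      show "convex {p :: point. \<sigma> * (p$2 - m * p$1 - q) < 0}" by (rule convex_hp_neg)
    next
      show "V (As u) \<subseteq> {p. \<sigma> * (p$2 - m * p$1 - q) < 0}"
      proof
        fix p assume "p \<in> V (As u)"
        then obtain i j where ij: "i \<in> B u" "j \<in> B u" "i \<noteq> j" "p$2 - m * p$1 - q = chd a b i j m - q"
          using Vv u by blast
        show "p \<in> {p. \<sigma> * (p$2 - m * p$1 - q) < 0}"
        proof (cases "u < t")
          case True
          have "1 + t * c \<in> B t" unfolding B_def using c by simp
          then have "i < 1 + t * c" "j < 1 + t * c" using Bord[OF True] ij by auto
          then show ?thesis using sp ij unfolding sep_def by auto
        next
          case False
          then have tu: "t < u" using u by simp
          have "t * c + c \<in> B t" unfolding B_def using c by simp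
          then have "t * c + c < i" "t * c + c < j" using Bord[OF tu] ij by auto
          moreover have "i < n" "j < n" using Bn u ij by auto
          ultimately show ?thesis using sp ij unfolding sep_def by auto
        qed
      qed
    qed
    show ?thesis using own oth by blast
  qed
  have conv: "convex_position (x ` {..<k})" if x: "\<forall>i<k. x i \<in> CH (As i)" for x
    unfolding convex_position_def
  proof (intro conjI ballI)
    show "finite (x ` {..<k})" by simp
    fix y assume "y \<in> x ` {..<k}"
    then obtain t where t: "t < k" "y = x t" by auto
    obtain m q \<sigma> where sp: "sep a b n (1 + t * c) (t * c + c) m q \<sigma>" using seps t by blast
    note sd = sides[OF t(1) sp]
    have pos: "x t \<in> {p. 0 < \<sigma> * (p$2 - m * p$1 - q)}" using sd x t by blast
    have rest: "x ` {..<k} - {x t} \<subseteq> {p. \<sigma> * (p$2 - m * p$1 - q) < 0}"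
    proof
      fix z assume "z \<in> x ` {..<k} - {x t}"
      then obtain u where u: "u < k" "z = x u" "x u \<noteq> x t" by auto
      then have "u \<noteq> t" by auto
      then show "z \<in> {p. \<sigma> * (p$2 - m * p$1 - q) < 0}" using sd u x by blast
    qed
    have "convex hull (x ` {..<k} - {x t}) \<subseteq> {p. \<sigma> * (p$2 - m * p$1 - q) < 0}"
      by (rule hull_minimal[where S=convex, OF rest convex_hp_neg])
    then have nin: "x t \<notin> convex hull (x ` {..<k} - {x t})" using pos by auto
    have "x t extreme_point_of convex hull (insert (x t) (x ` {..<k} - {x t}))"
      by (rule extreme_point_of_convex_hull_insert) (use nin in auto)
    moreover have "insert (x t) (x ` {..<k} - {x t}) = x ` {..<k}" using t by auto
    ultimately show "y extreme_point_of convex hull (x ` {..<k})" using t by simp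
  qed
  show ?thesis
    apply (rule exI[of _ As])
    using sub card disj conv by auto
qed


lemma vec2_eq: "(p :: real^2) = q \<longleftrightarrow> p$1 = q$1 \<and> p$2 = q$2"
  by (simp add: vec_eq_iff forall_2)
lemma line_cases:
  assumes "is_line L"
  shows "(\<exists>x0. L = {p. p$1 = x0}) \<or> (\<exists>\<alpha> \<beta>. L = NV \<alpha> \<beta>)"
proof -
  obtain a b :: point where ab: "b \<noteq> 0" "L = {a + t *\<^sub>R b | t. True}"
    using assms unfolding is_line_def by blast
  show ?thesis
  proof (cases "b$1 = 0")
    case True
    then have b2: "b$2 \<noteq> 0" using ab(1) vec2_eq[of b 0] by auto
    have "L = {p. p$1 = a$1}"
    proof (intro set_eqI iffI)
      fix p :: point assume "p \<in> L"
      then show "p \<in> {p. p$1 = a$1}" using ab True by auto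
    next
      fix p :: point assume p: "p \<in> {p. p$1 = a$1}"
      define t where "t = (p$2 - a$2) / b$2"
      have "p = a + t *\<^sub>R b" unfolding vec2_eq t_def using p True b2 by auto
      then show "p \<in> L" using ab by auto
    qed
    then show ?thesis by blast
  next
    case False
    define \<alpha> where "\<alpha> = b$2 / b$1"
    define \<beta> where "\<beta> = a$2 - \<alpha> * a$1"
    have "L = NV \<alpha> \<beta>"
    proof (intro set_eqI iffI)
      fix p :: point assume "p \<in> L"
      then obtain t where "p = a + t *\<^sub>R b" using ab by auto
      then show "p \<in> NV \<alpha> \<beta>" unfolding NV_def \<alpha>_def \<beta>_def using False
        by (simp add: field_simps)
    next
      fix p :: point assume p: "p \<in> NV \<alpha> \<beta>"
      define t where "t = (p$1 - a$1) / b$1"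
      have "p = a + t *\<^sub>R b" unfolding vec2_eq t_def using p False
        unfolding NV_def \<alpha>_def \<beta>_def by (simp add: field_simps)
      then show "p \<in> L" using ab by auto
    qed
    then show ?thesis by blast
  qed
qed


lemma par_case:
  fixes C A :: "point set set"
  assumes fin: "finite C" and CA: "C \<subseteq> A" and kc: "k * c \<le> card C" and k: "k > 0"
    and disj: "\<And>L M. L \<in> C \<Longrightarrow> M \<in> C \<Longrightarrow> L \<noteq> M \<Longrightarrow> L \<inter> M = {}"
  shows "\<exists>As :: nat \<Rightarrow> point set set.
              (\<forall>i<k. As i \<subseteq> A \<and> card (As i) \<ge> c) \<and>
              (\<forall>i<k. \<forall>j<k. i \<noteq> j \<longrightarrow> As i \<inter> As j = {}) \<and>
              (\<forall>x :: nat \<Rightarrow> point. (\<forall>i<k. x i \<in> CH (As i)) \<longrightarrow>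
                  convex_position (x ` {..<k}))"
proof -
  obtain h where h: "bij_betw h {0..<card C} C" using ex_bij_betw_nat_finite[OF fin] by blast
  define I where "I i = {i * c ..< i * c + c}" for i
  define As where "As i = h ` I i" for i
  have Isub: "I i \<subseteq> {0..<card C}" if ik: "i < k" for i
  proof -
    have "(i + 1) * c \<le> k * c" using ik by (intro mult_le_mono1) simp
    then have "i * c + c \<le> card C" using kc by (simp add: algebra_simps)
    then show ?thesis unfolding I_def by auto
  qed
  have inj: "inj_on h {0..<card C}" using h by (simp add: bij_betw_def)
  have hC: "h ` {0..<card C} = C" using h by (simp add: bij_betw_def)
  have sub: "As i \<subseteq> C" if "i < k" for i
  proof -
    have "As i \<subseteq> h ` {0..<card C}" unfolding As_def using Isub[OF that] by (rule image_mono)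
    then show ?thesis using hC by simp
  qed
  have card: "card (As i) = c" if "i < k" for i
  proof -
    have "card (As i) = card (I i)" unfolding As_def
      by (rule card_image) (rule inj_on_subset[OF inj Isub[OF that]])
    then show ?thesis unfolding I_def by simp
  qed
  have Idj: "I i \<inter> I j = {}" if "i < j" for i j
  proof -
    have "(i + 1) * c \<le> j * c" using that by (intro mult_le_mono1) simp
    then have "i * c + c \<le> j * c" by (simp add: algebra_simps)
    then show ?thesis unfolding I_def by auto
  qed
  have dj: "As i \<inter> As j = {}" if "i < k" "j < k" "i \<noteq> j" for i j
  proof -
    have "I i \<inter> I j = {}" using Idj[of i j] Idj[of j i] that by (cases "i < j") (auto simp: Int_commute)
    then show ?thesis unfolding As_def using inj_on_image_Int[OF inj Isub[OF that(1)] Isub[OF that(2)]] by simp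
  qed
  have V0: "V (As i) = {}" if "i < k" for i
  proof -
    have "\<And>L M. L \<in> As i \<Longrightarrow> M \<in> As i \<Longrightarrow> L \<noteq> M \<Longrightarrow> L \<inter> M = {}"
      using sub[OF that] disj by (meson subsetD)
    then show ?thesis unfolding V_def by blast
  qed
  have nox: "\<not> (\<forall>i<k. x i \<in> CH (As i))" for x :: "nat \<Rightarrow> point"
  proof
    assume "\<forall>i<k. x i \<in> CH (As i)"
    then have "x 0 \<in> CH (As 0)" using k by simp
    then show False using V0[OF k] unfolding CH_def by simp
  qed
  have A1: "\<forall>i<k. As i \<subseteq> A \<and> card (As i) \<ge> c" using sub card CA by auto
  have A2: "\<forall>i<k. \<forall>j<k. i \<noteq> j \<longrightarrow> As i \<inter> As j = {}" using dj by blast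
  show ?thesis using A1 A2 nox by blast
qed

lemma enum_set:
  fixes X :: "'a :: linorder set"
  assumes "finite X" "n \<le> card X"
  shows "\<exists>e. (\<forall>i<n. e i \<in> X) \<and> (\<forall>i j. i < j \<longrightarrow> j < n \<longrightarrow> e i < e j)"
proof -
  define xs where "xs = sorted_list_of_set X"
  have len: "length xs = card X" unfolding xs_def by simp
  have st: "sorted_wrt (<) xs" unfolding xs_def by (rule strict_sorted_list_of_set)
  have set: "set xs = X" unfolding xs_def using assms(1) by simp
  show ?thesis
    apply (rule exI[of _ "\<lambda>i. xs ! i"])
    using st len set assms(2) by (auto simp: sorted_wrt_nth_less)
qed

lemma sorted3_eq:
  fixes i j l i' j' l' :: nat
  assumes "i < j" "j < l" "i' < j'" "j' < l'" "{i, j, l} = {i', j', l'}"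
  shows "i = i' \<and> j = j' \<and> l = l'"
proof -
  have "i \<in> {i', j', l'}" "j \<in> {i', j', l'}" "l \<in> {i', j', l'}"
       "i' \<in> {i, j, l}" "j' \<in> {i, j, l}" "l' \<in> {i, j, l}" using assms(5) by blast+
  then show ?thesis using assms(1-4) by auto
qed

lemma col_eval:
  fixes F G :: "nat \<Rightarrow> nat \<Rightarrow> nat \<Rightarrow> bool"
  assumes "i < j" "j < l"
  shows "(if \<exists>i' j' l'. {i, j, l} = {i', j', l'} \<and> i' < j' \<and> j' < l' \<and> F i' j' l' then (0::nat)
          else if \<exists>i' j' l'. {i, j, l} = {i', j', l'} \<and> i' < j' \<and> j' < l' \<and> G i' j' l' then 1 else 2)
       = (if F i j l then 0 else if G i j l then 1 else 2)"
proof -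
  have ex: "(\<exists>i' j' l'. {i, j, l} = {i', j', l'} \<and> i' < j' \<and> j' < l' \<and> P i' j' l') \<longleftrightarrow> P i j l"
    for P :: "nat \<Rightarrow> nat \<Rightarrow> nat \<Rightarrow> bool"
  proof
    assume "\<exists>i' j' l'. {i, j, l} = {i', j', l'} \<and> i' < j' \<and> j' < l' \<and> P i' j' l'"
    then obtain i' j' l' where h: "{i, j, l} = {i', j', l'}" "i' < j'" "j' < l'" "P i' j' l'" by blast
    have "i = i' \<and> j = j' \<and> l = l'" by (rule sorted3_eq[OF assms h(2) h(3) h(1)])
    then show "P i j l" using h(4) by simp
  next
    assume "P i j l"
    then show "\<exists>i' j' l'. {i, j, l} = {i', j', l'} \<and> i' < j' \<and> j' < l' \<and> P i' j' l'"
      using assms by blast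
  qed
  show ?thesis unfolding ex[of F] ex[of G] ..
qed

lemma tri_cases:
  fixes x y :: real
  assumes "(if x < y then (0::nat) else if x > y then 1 else 2) = ci"
  shows "(ci = 0 \<longleftrightarrow> x < y) \<and> (ci = 1 \<longleftrightarrow> x > y) \<and> (ci = 2 \<longleftrightarrow> x = y)"
proof (cases "x < y")
  case True then show ?thesis using assms by simp
next
  case False
  then show ?thesis
  proof (cases "x > y")
    case True then show ?thesis using assms False by simp
  next
    case F2: False
    then have "x = y" using False by simp
    then show ?thesis using assms by simp
  qed
qed

theorem mainTheorem12:
  fixes k r c :: nat
  assumes "k > 0" and "r > 0" and "c > 0"
  shows "\<exists>N::nat. \<forall>A :: point set set.
           finite A \<and> card A = N \<and> (\<forall>L\<in>A. is_line L) \<and>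
           (\<forall>p. card {L\<in>A. p \<in> L} \<le> r) \<longrightarrow>
           (\<exists>As :: nat \<Rightarrow> point set set.
              (\<forall>i<k. As i \<subseteq> A \<and> card (As i) \<ge> c) \<and>
              (\<forall>i<k. \<forall>j<k. i \<noteq> j \<longrightarrow> As i \<inter> As j = {}) \<and>
              (\<forall>x :: nat \<Rightarrow> point. (\<forall>i<k. x i \<in> CH (As i)) \<longrightarrow>
                  convex_position (x ` {..<k})))"
proof -
  note kpos = assms(1) and cpos = assms(3)
  define K where "K = k * c + r + 3"
  obtain R :: nat where R: "partn_lst {..<R} [K, K, K] 3" using ramsey_full[of "[K, K, K]" 3] by blast
  define N where "N = (R + 1) * (k * c)"
  have kc: "k * c > 0" using kpos cpos by simp
  show ?thesis
  proof (intro exI[of _ N] allI impI)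
    fix A :: "point set set"
    assume HA: "finite A \<and> card A = N \<and> (\<forall>L\<in>A. is_line L) \<and> (\<forall>p. card {L\<in>A. p \<in> L} \<le> r)"
    then have fin: "finite A" and cA: "card A = N" and lines: "\<forall>L\<in>A. is_line L"
      and conc: "\<And>p. card {L\<in>A. p \<in> L} \<le> r" by auto
    define Vt where "Vt = {L\<in>A. \<exists>x0. L = {p :: point. p$1 = x0}}"
    define Sl where "Sl = {\<alpha>. \<exists>\<beta>. NV \<alpha> \<beta> \<in> A}"
    define Cl where "Cl \<alpha> = {L\<in>A. \<exists>\<beta>. L = NV \<alpha> \<beta>}" for \<alpha>
    show "\<exists>As :: nat \<Rightarrow> point set set.
              (\<forall>i<k. As i \<subseteq> A \<and> card (As i) \<ge> c) \<and>
              (\<forall>i<k. \<forall>j<k. i \<noteq> j \<longrightarrow> As i \<inter> As j = {}) \<and>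
              (\<forall>x :: nat \<Rightarrow> point. (\<forall>i<k. x i \<in> CH (As i)) \<longrightarrow>
                  convex_position (x ` {..<k}))"
    proof (cases "k * c \<le> card Vt")
      case True
      show ?thesis
      proof (rule par_case[OF _ _ True kpos])
        show "finite Vt" "Vt \<subseteq> A" unfolding Vt_def using fin by auto
        fix L M assume "L \<in> Vt" "M \<in> Vt" "L \<noteq> M"
        then obtain x0 x1 where "L = {p :: point. p$1 = x0}" "M = {p :: point. p$1 = x1}"
          unfolding Vt_def by auto
        then show "L \<inter> M = {}" using \<open>L \<noteq> M\<close> by auto
      qed
    next
      case Vsmall: False
      show ?thesis
      proof (cases "\<exists>\<alpha>\<in>Sl. k * c \<le> card (Cl \<alpha>)")
        case True
        then obtain \<alpha> where \<alpha>: "k * c \<le> card (Cl \<alpha>)" by blast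
        show ?thesis
        proof (rule par_case[OF _ _ \<alpha> kpos])
          show "finite (Cl \<alpha>)" "Cl \<alpha> \<subseteq> A" unfolding Cl_def using fin by auto
          fix L M assume "L \<in> Cl \<alpha>" "M \<in> Cl \<alpha>" "L \<noteq> M"
          then obtain \<beta> \<beta>' where LM: "L = NV \<alpha> \<beta>" "M = NV \<alpha> \<beta>'" unfolding Cl_def by auto
          then have "\<beta> \<noteq> \<beta>'" using \<open>L \<noteq> M\<close> by auto
          then show "L \<inter> M = {}" unfolding LM NV_def by auto
        qed
      next
        case Csmall: False
        define f where "f L = (SOME \<alpha>. \<exists>\<beta>. L = NV \<alpha> \<beta>)" for L
        have Slf: "Sl \<subseteq> f ` A"
        proof
          fix \<alpha> assume "\<alpha> \<in> Sl"
          then obtain \<beta> where b: "NV \<alpha> \<beta> \<in> A" unfolding Sl_def by auto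
          have "\<exists>\<beta>'. NV \<alpha> \<beta> = NV (f (NV \<alpha> \<beta>)) \<beta>'"
            unfolding f_def by (rule someI_ex) blast
          then have "f (NV \<alpha> \<beta>) = \<alpha>" using NV_inj by metis
          then show "\<alpha> \<in> f ` A" using b by force
        qed
        have finSl: "finite Sl" using finite_subset[OF Slf] fin by blast
        have Acov: "A \<subseteq> Vt \<union> (\<Union>\<alpha>\<in>Sl. Cl \<alpha>)"
        proof
          fix L assume L: "L \<in> A"
          then have "(\<exists>x0. L = {p. p$1 = x0}) \<or> (\<exists>\<alpha> \<beta>. L = NV \<alpha> \<beta>)" using lines line_cases by blast
          then show "L \<in> Vt \<union> (\<Union>\<alpha>\<in>Sl. Cl \<alpha>)"
            unfolding Vt_def Cl_def Sl_def using L by blast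
        qed
        have "card A \<le> card (Vt \<union> (\<Union>\<alpha>\<in>Sl. Cl \<alpha>))"
        proof (rule card_mono)
          show "finite (Vt \<union> (\<Union>\<alpha>\<in>Sl. Cl \<alpha>))" using finSl fin unfolding Vt_def Cl_def by auto
        qed (rule Acov)
        also have "\<dots> \<le> card Vt + card (\<Union>\<alpha>\<in>Sl. Cl \<alpha>)" by (rule card_Un_le)
        also have "card (\<Union>\<alpha>\<in>Sl. Cl \<alpha>) \<le> (\<Sum>\<alpha>\<in>Sl. card (Cl \<alpha>))" by (rule card_UN_le[OF finSl])
        also have "(\<Sum>\<alpha>\<in>Sl. card (Cl \<alpha>)) \<le> card Sl * (k * c)"
          using sum_bounded_above[of Sl "\<lambda>\<alpha>. card (Cl \<alpha>)" "k * c"] Csmall by force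
        finally have "card A \<le> card Vt + card Sl * (k * c)" by simp
        moreover have "card Vt < k * c" using Vsmall by simp
        ultimately have "card A < k * c + card Sl * (k * c)" by linarith
        then have "(R + 1) * (k * c) < (1 + card Sl) * (k * c)"
          using cA unfolding N_def by (simp add: algebra_simps)
        then have "R + 1 < 1 + card Sl" by (rule mult_less_cancel2[THEN iffD1, THEN conjunct2])
        then have RSl: "R \<le> card Sl" by simp
        obtain a0 where a0: "\<And>i. i < R \<Longrightarrow> a0 i \<in> Sl" "\<And>i j. i < j \<Longrightarrow> j < R \<Longrightarrow> a0 i < a0 j"
          using enum_set[OF finSl RSl] by blast
        define b0 where "b0 i = (SOME \<beta>. NV (a0 i) \<beta> \<in> A)" for i
        have inA0: "NV (a0 i) (b0 i) \<in> A" if "i < R" for i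
          unfolding b0_def using a0(1)[OF that] unfolding Sl_def by (auto intro: someI_ex)
        define P0 where "P0 X = (\<exists>i j l. X = {i, j, l} \<and> i < j \<and> j < l \<and> sl a0 b0 i j < sl a0 b0 j l)" for X
        define P1 where "P1 X = (\<exists>i j l. X = {i, j, l} \<and> i < j \<and> j < l \<and> sl a0 b0 i j > sl a0 b0 j l)" for X
        define col where "col X = (if P0 X then (0::nat) else if P1 X then 1 else 2)" for X
        have colv: "col {i, j, l} = (if sl a0 b0 i j < sl a0 b0 j l then 0 else if sl a0 b0 i j > sl a0 b0 j l then 1 else 2)"
          if "i < j" "j < l" for i j l
        proof -
          have "col {i, j, l} = (if \<exists>i' j' l'. {i, j, l} = {i', j', l'} \<and> i' < j' \<and> j' < l' \<and> sl a0 b0 i' j' < sl a0 b0 j' l' then (0::nat)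
            else if \<exists>i' j' l'. {i, j, l} = {i', j', l'} \<and> i' < j' \<and> j' < l' \<and> sl a0 b0 i' j' > sl a0 b0 j' l' then 1 else 2)"
            unfolding col_def P0_def P1_def by (rule refl)
          also have "\<dots> = (if sl a0 b0 i j < sl a0 b0 j l then 0 else if sl a0 b0 i j > sl a0 b0 j l then 1 else 2)"
            by (rule col_eval[OF that])
          finally show ?thesis .
        qed
        have col3: "col X < 3" for X unfolding col_def by simp
        have colPi: "col \<in> nsets {..<R} 3 \<rightarrow> {..<length [K, K, K]}" using col3 by (auto simp: numeral_3_eq_3)
        obtain ci H where ci: "ci < 3" and H: "H \<in> nsets {..<R} K" and Hc: "col ` nsets H 3 \<subseteq> {ci}"
        proof -
          from R colPi obtain ci where c1: "ci < length [K, K, K]" and c2: "monochromatic {..<R} ([K, K, K] ! ci) 3 col ci"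
            unfolding partn_lst_def by blast
          have c3: "ci < 3" using c1 by simp
          have "[K, K, K] ! ci = K" using c3 by (auto simp: less_Suc_eq numeral_3_eq_3)
          then obtain H where "H \<in> nsets {..<R} K" "col ` nsets H 3 \<subseteq> {ci}"
            using c2 unfolding monochromatic_def by auto
          then show ?thesis using that c3 by blast
        qed
        have finH: "finite H" and cH: "card H = K" and HR: "H \<subseteq> {..<R}" using H unfolding nsets_def by auto
        obtain e where e: "\<And>i. i < K \<Longrightarrow> e i \<in> H" "\<And>i j. i < j \<Longrightarrow> j < K \<Longrightarrow> e i < e j"
          using enum_set[OF finH, of K] cH by auto
        define a where "a i = a0 (e i)" for i
        define b where "b i = b0 (e i)" for i
        have eR: "e i < R" if "i < K" for i using e(1)[OF that] HR by auto
        have inc: "a i < a j" if "i < j" "j < K" for i j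
          unfolding a_def using a0(2) e(2)[OF that] eR that by auto
        have inA: "NV (a i) (b i) \<in> A" if "i < K" for i unfolding a_def b_def using inA0 eR that by auto
        have sla: "sl a b i j = sl a0 b0 (e i) (e j)" for i j unfolding sl_def a_def b_def by simp
        have trip: "(if sl a b i j < sl a b j l then 0 else if sl a b i j > sl a b j l then 1 else 2) = ci"
          if "i < j" "j < l" "l < K" for i j l
        proof -
          have lt: "e i < e j" "e j < e l" using e(2) that by auto
          have "{e i, e j, e l} \<in> nsets H 3"
            unfolding nsets_def using e(1) that lt by auto
          then have "col {e i, e j, e l} = ci" using Hc by blast
          then show ?thesis unfolding sla colv[OF lt] .
        qed
        have inja: "a i \<noteq> a j" if "i < K" "j < K" "i \<noteq> j" for i j
          using inc that by (metis less_irrefl nat_neq_iff)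
        have Kn: "k * c + 2 \<le> K" unfolding K_def by simp
        have blk: "1 \<le> 1 + t * c" "1 + t * c \<le> t * c + c" "t * c + c + 1 < K" if "t < k" for t
        proof -
          have "(t + 1) * c \<le> k * c" using that by (intro mult_le_mono1) simp
          then show "1 \<le> 1 + t * c" "1 + t * c \<le> t * c + c" "t * c + c + 1 < K"
            using cpos unfolding K_def by (auto simp: algebra_simps)
        qed
        show ?thesis
        proof (cases "ci = 0")
          case True
          interpret cs: cupseq a b K
          proof
            show "a i < a j" if "i < j" "j < K" for i j using inc that .
            show "sl a b i j < sl a b j l" if "i < j" "j < l" "l < K" for i j l
              using tri_cases[OF trip[OF that]] True by simp
          qed
          show ?thesis
          proof (rule final_geo[OF inja inA Kn cpos])
            fix t assume "t < k"
            then show "\<exists>m q \<sigma>. sep a b K (1 + t * c) (t * c + c) m q \<sigma>"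
              using cs.cup_sep[OF blk[OF \<open>t < k\<close>]] by (elim exE) (rule exI)+
          qed
        next
          case ci0: False
          show ?thesis
          proof (cases "ci = 1")
            case True
            have cap: "sl a b i j > sl a b j l" if "i < j" "j < l" "l < K" for i j l
              using tri_cases[OF trip[OF that]] True by simp
            show ?thesis
            proof (rule final_geo[OF inja inA Kn cpos])
              fix t assume "t < k"
              then show "\<exists>m q \<sigma>. sep a b K (1 + t * c) (t * c + c) m q \<sigma>"
              proof -
                have "\<exists>m q. sep a b K (1 + t * c) (t * c + c) m q (-1)"
                proof (rule cap_sep)
                  show "a i < a j" if "i < j" "j < K" for i j using inc that by blast
                  show "sl a b i j > sl a b j l" if "i < j" "j < l" "l < K" for i j l using cap that by blast
                qed (use blk[OF \<open>t < k\<close>] in auto)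
                then show ?thesis by (elim exE) (rule exI)+
              qed
            qed
          next
            case False
            then have ci2: "ci = 2" using ci ci0 by auto
            have eqs: "sl a b i j = sl a b j l" if "i < j" "j < l" "l < K" for i j l
              using tri_cases[OF trip[OF that]] ci2 by simp
            define s where "s = sl a b 0 1"
            have K2: "2 < K" unfolding K_def by simp
            have bl: "b l = b 0 + s * (a l - a 0)" if "l < K" for l
            proof -
              have a01: "a 0 \<noteq> a 1" using inja K2 by simp
              have b1: "b 1 = b 0 + s * (a 1 - a 0)" unfolding s_def using b_via_sl[OF a01] .
              consider "l = 0" | "l = 1" | "1 < l" by linarith
              then show ?thesis
              proof cases
                case 3
                have a1l: "a 1 \<noteq> a l" using inja 3 that by simp
                have "b l = b 1 + sl a b 1 l * (a l - a 1)" using b_via_sl[OF a1l] .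
                moreover have "sl a b 1 l = s" unfolding s_def using eqs[of 0 1 l] 3 that by simp
                ultimately show ?thesis using b1 by (simp add: algebra_simps)
              qed (use b1 in auto)
            qed
            define p :: point where "p = vector [- s, a 0 * (- s) + b 0]"
            have pin: "p \<in> NV (a l) (b l)" if "l < K" for l
              unfolding NV_def p_def using bl[OF that] by (simp add: algebra_simps)
            have injl: "inj_on (\<lambda>l. NV (a l) (b l)) {..<K}"
              unfolding inj_on_def using NV_inj inja by blast
            have "(\<lambda>l. NV (a l) (b l)) ` {..<K} \<subseteq> {L\<in>A. p \<in> L}" using pin inA by auto
            then have "card ((\<lambda>l. NV (a l) (b l)) ` {..<K}) \<le> card {L\<in>A. p \<in> L}"
              by (rule card_mono[rotated]) (use fin in auto)
            then have "K \<le> r" using card_image[OF injl] conc[of p] by simp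
            then show ?thesis unfolding K_def by simp
          qed
        qed
      qed
    qed
  qed
qed


end
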